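(* Let $m$ be an integer and $n>0$ an integer. (1) The ordered root quadruples $\mathbf v=(w,x,y,z)$, $w\le x\le y\le z$, with $L(\mathbf v)>0$, $Q_{\mathcal D}(\mathbf v)=4m$ and smallest element $w=-n$ are in one-to-one correspondence with the integral binary quadratic forms $[A,B,C]=AX^2+2BXY+CY^2$ (primitive or imprimitive) of discriminant $\Delta=4B^2-4AC=-4n^2+4m$ satisfying $0\le 2B\le A\le C$; the correspondence is given by $$[A,B,C]=\left[-n+x,\ \tfrac12(-n+x+y-z),\ -n+y\right].$$ (2) If $\Delta=-4n^2+4m<0$, then $N_{\mathrm{root}}(4m;-n)=\widetilde{h^{\pm}}(-4(n^2-m))$.
   Context: $Q_{\mathcal D}(a,b,c,d)=2(a^2+b^2+c^2+d^2)-(a+b+c+d)^2$; $L(\mathbf v)=a+b+c+d$; $|\mathbf v|=|a|+|b|+|c|+|d|$. $\mathbf S_i$ ($i=1,\dots,4$) is the integer matrix replacing the $i$-th coordinate $a_i$ of a quadruple by $2\sum_{j\ne i}a_j-a_i$, other coordinates fixed. An integer quadruple is reduced if no $\mathbf S_i$ strictly decreases $|\cdot|$; a reduced quadruple ordered as $a\le b\le c\le d$ with $L\ge0$ is a root quadruple if $a+b+c\ge d>0$. $N_{\mathrm{root}}(k;-n)$ is the number of integer root quadruples $(w,x,y,z)$ with $Q_{\mathcal D}=k$, $w+x+y+z>0$ and smallest element $w=-n$. For a discriminant $\Delta<0$, $\widetilde{h^{\pm}}(\Delta)$ is the number of integral binary quadratic forms $[A,B,C]=AT^2+2BTU+CU^2$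 (primitive or imprimitive) with $4B^2-4AC=\Delta$ and $0\le2B\le A\le C$ (the $GL(2,\mathbb Z)$-reduced forms; equivalently the number of $GL(2,\mathbb Z)$-equivalence classes of positive definite forms of discriminant $\Delta$). *)

theory Defs
  imports Main
begin

type_synonym quad = "int \<times> int \<times> int \<times> int"

definition QD :: "quad \<Rightarrow> int" where
  "QD v = (case v of (a,b,c,d) \<Rightarrow> 2*(a^2+b^2+c^2+d^2) - (a+b+c+d)^2)"

definition Lq :: "quad \<Rightarrow> int" where
  "Lq v = (case v of (a,b,c,d) \<Rightarrow> a+b+c+d)"

definition normq :: "quad \<Rightarrow> int" where
  "normq v = (case v of (a,b,c,d) \<Rightarrow> \<bar>a\<bar>+\<bar>b\<bar>+\<bar>c\<bar>+\<bar>d\<bar>)"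

definition Sq :: "nat \<Rightarrow> quad \<Rightarrow> quad" where
  "Sq i v = (case v of (a,b,c,d) \<Rightarrow>
     if i = 1 then (2*(b+c+d) - a, b, c, d)
     else if i = 2 then (a, 2*(a+c+d) - b, c, d)
     else if i = 3 then (a, b, 2*(a+b+d) - c, d)
     else (a, b, c, 2*(a+b+c) - d))"

definition reduced :: "quad \<Rightarrow> bool" where
  "reduced v \<longleftrightarrow> (\<forall>i\<in>{1..4}. \<not> normq (Sq i v) < normq v)"

definition root_quad :: "quad \<Rightarrow> bool" where
  "root_quad v \<longleftrightarrow> reduced v \<and> (case v of (a,b,c,d) \<Rightarrow>
      a \<le> b \<and> b \<le> c \<and> c \<le> d \<and> a+b+c+d \<ge> 0 \<and> a+b+c \<ge> d \<and> d > 0)"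

definition N_root :: "int \<Rightarrow> int \<Rightarrow> nat" where
  "N_root k s = card {v. root_quad v \<and> QD v = k \<and> Lq v > 0 \<and> fst v = s}"

text \<open>GL(2,Z)-reduced forms [A,B,C] = A T^2 + 2 B T U + C U^2 of discriminant 4B^2-4AC.\<close>
definition gl_reduced_forms :: "int \<Rightarrow> (int \<times> int \<times> int) set" where
  "gl_reduced_forms \<Delta> = {(A,B,C). 4*B^2 - 4*A*C = \<Delta> \<and> 0 \<le> 2*B \<and> 2*B \<le> A \<and> A \<le> C}"

definition h_tilde_pm :: "int \<Rightarrow> nat" where
  "h_tilde_pm \<Delta> = card (gl_reduced_forms \<Delta>)"

end

theory Submission
  imports Defs
begin

lemma qd_id:
  fixes w x y z :: int
  shows "(w+x+y-z)^2 - 4*(w+x)*(w+y) = QD (w,x,y,z) - 4*w^2"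
  unfolding QD_def by (simp add: power2_eq_square algebra_simps)

lemma fwd:
  fixes m n w x y z :: int
  assumes r: "root_quad (w,x,y,z)" and q: "QD (w,x,y,z) = 4*m" and wn: "w = -n"
  shows "even (-n+x+y-z) \<and> (-n+x, (-n+x+y-z) div 2, -n+y) \<in> gl_reduced_forms (-4*n^2 + 4*m)"
proof -
  have "even ((w+x+y+z)^2)"
  proof -
    have "(w+x+y+z)^2 = 2*(w^2+x^2+y^2+z^2) - 4*m" using q unfolding QD_def by simp
    then show ?thesis by simp
  qed
  then have "even (w+x+y+z)" by simp
  then have ev: "even (-n+x+y-z)" using wn
    by (metis add_diff_cancel_right' diff_add_eq even_add mult_2 add.assoc even_diff diff_minus_eq_add minus_minus dvd_add_triv_right_iff)
  then obtain B where B: "-n+x+y-z = 2*B" by (metis dvd_def)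
  have o: "w \<le> x" "x \<le> y" "y \<le> z" "w+x+y \<ge> z" using r unfolding root_quad_def by auto
  have d: "4*B^2 - 4*(-n+x)*(-n+y) = -4*n^2 + 4*m"
  proof -
    have "(w+x+y-z)^2 - 4*(w+x)*(w+y) = 4*m - 4*w^2" using qd_id q by simp
    moreover have "w+x+y-z = 2*B" using B wn by simp
    ultimately have "(2*B)^2 - 4*(w+x)*(w+y) = 4*m - 4*w^2" by simp
    then show ?thesis using wn by (simp add: power2_eq_square algebra_simps)
  qed
  show ?thesis using ev B d o wn unfolding gl_reduced_forms_def by auto
qed

lemma bwd:
  fixes m n A B C :: int
  assumes n: "n > 0" and f: "(A,B,C) \<in> gl_reduced_forms (-4*n^2 + 4*m)"
  shows "root_quad (-n, A+n, C+n, A+C+n-2*B) \<and> Lq (-n, A+n, C+n, A+C+n-2*B) > 0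
     \<and> QD (-n, A+n, C+n, A+C+n-2*B) = 4*m"
proof -
  have c: "4*B^2 - 4*A*C = -4*n^2 + 4*m" "0 \<le> 2*B" "2*B \<le> A" "A \<le> C"
    using f unfolding gl_reduced_forms_def by auto
  have red: "reduced (-n, A+n, C+n, A+C+n-2*B)"
    unfolding reduced_def
  proof
    fix i :: nat assume "i \<in> {1..4}"
    then have "i = 1 \<or> i = 2 \<or> i = 3 \<or> i = 4" by auto
    then show "\<not> normq (Sq i (-n, A+n, C+n, A+C+n-2*B)) < normq (-n, A+n, C+n, A+C+n-2*B)"
      using c n unfolding Sq_def normq_def by (auto simp: abs_if)
  qed
  have qd: "QD (-n, A+n, C+n, A+C+n-2*B) = 4*m"
    using c(1) unfolding QD_def by (simp add: power2_eq_square algebra_simps)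
  show ?thesis using red qd c n unfolding root_quad_def Lq_def by auto
qed

theorem theorem4p1:
  fixes m n :: int
  assumes "n > 0"
  shows "(\<forall>v\<in>{v. root_quad v \<and> Lq v > 0 \<and> QD v = 4*m \<and> fst v = -n}.
            (case v of (w,x,y,z) \<Rightarrow> even (-n+x+y-z)))
       \<and> bij_betw (\<lambda>(w,x,y,z). (-n+x, (-n+x+y-z) div 2, -n+y))
            {v. root_quad v \<and> Lq v > 0 \<and> QD v = 4*m \<and> fst v = -n}
            (gl_reduced_forms (-4*n^2 + 4*m))
       \<and> (-4*n^2 + 4*m < 0 \<longrightarrow> N_root (4*m) (-n) = h_tilde_pm (-4*(n^2 - m)))"
proof -
  define S where "S = {v. root_quad v \<and> Lq v > 0 \<and> QD v = 4*m \<and> fst v = -n}"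
  define f where "f = (\<lambda>(w::int,x,y,z). (-n+x, (-n+x+y-z) div 2, -n+(y::int)))"
  define g where "g = (\<lambda>(A,B,C). (-n, A+n, C+n, A+C+n-2*(B::int)))"
  have P1: "\<forall>v\<in>S. (case v of (w,x,y,z) \<Rightarrow> even (-n+x+y-z))"
  proof
    fix v assume "v \<in> S"
    moreover obtain w x y z where v: "v = (w,x,y,z)" by (cases v) auto
    ultimately have a2: "root_quad (w,x,y,z)" "QD (w,x,y,z) = 4*m" "w = -n" unfolding S_def by auto
    show "case v of (w,x,y,z) \<Rightarrow> even (-n+x+y-z)"
      using fwd[OF a2] v by simp
  qed
  have bij: "bij_betw f S (gl_reduced_forms (-4*n^2 + 4*m))"
  proof (rule bij_betw_byWitness[where f'=g])
    show "\<forall>a\<in>S. g (f a) = a"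
    proof
      fix a assume a: "a \<in> S"
      obtain w x y z where v: "a = (w,x,y,z)" by (cases a) auto
      have a2: "root_quad (w,x,y,z)" "QD (w,x,y,z) = 4*m" "w = -n" using a v unfolding S_def by auto
      have "even (-n+x+y-z)" using fwd[OF a2] by blast
      note this a2(3)
      then obtain k where "-n+x+y-z = 2*k" by (metis dvd_def)
      then show "g (f a) = a" unfolding f_def g_def v using \<open>w = -n\<close> by auto
    qed
    show "\<forall>a'\<in>gl_reduced_forms (-4*n^2 + 4*m). f (g a') = a'"
      unfolding f_def g_def by auto
    show "f ` S \<subseteq> gl_reduced_forms (-4*n^2 + 4*m)"
    proof
      fix t assume "t \<in> f ` S"
      then obtain w x y z where "(w,x,y,z) \<in> S" "t = f (w,x,y,z)" by auto
      then have a2: "root_quad (w,x,y,z)" "QD (w,x,y,z) = 4*m" "w = -n" and t: "t = f (w,x,y,z)" unfolding S_def by auto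
      show "t \<in> gl_reduced_forms (-4*n^2 + 4*m)"
        using fwd[OF a2] t unfolding f_def by simp
    qed
    show "g ` gl_reduced_forms (-4*n^2 + 4*m) \<subseteq> S"
      unfolding S_def g_def using bwd[OF assms] by fastforce
  qed
  have "N_root (4*m) (-n) = card S"
    unfolding N_root_def S_def by (rule arg_cong[where f=card]) auto
  also have "\<dots> = h_tilde_pm (-4*(n^2 - m))"
    using bij_betw_same_card[OF bij] unfolding h_tilde_pm_def by (simp add: algebra_simps)
  finally show ?thesis using P1 bij unfolding S_def f_def by auto
qed

end
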